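(* Let $n\ge 2$, $a\ge\sqrt{n-1}$, $f(x)=a|x^{(1)}|+\sum_{i=2}^n x^{(i)}$ on $\mathbb{R}^n$, and $0<c_1<c_2<1$. Let $x_0\in\mathbb{R}^n$ with $x_0^{(1)}\ne 0$, and define $x_{k+1}=x_k+t_kd_k$ with $d_k=-\nabla f(x_k)$, where the steps $t_k$ satisfy $A(t_k)$ and $W(t_k)$ for all $k=0,1,2,\dots$. Let $S_N=\sum_{k=0}^{N-1}t_k$. Then for every $N\ge1$, $$c_1(a^2+n-1)S_N\le f(x_0)-f(x_N)\le (n-1)S_N+a|x_0^{(1)}|,$$ so that $S_N$ is bounded above as $N\to\infty$ if and only if $f(x_N)$ is bounded below. Furthermore, $f(x_N)$ is bounded below if and only if $x_N$ converges to a point $\bar x$ with $\bar x^{(1)}=0$.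
   Context: $x^{(i)}$ is the $i$-th coordinate. At iteration $k$ (where $f$ is differentiable at $x_k$), the Armijo condition is $A(t)$: $f(x_k+td_k)\le f(x_k)+c_1t\nabla f(x_k)^Td_k$; the Wolfe condition is $W(t)$: $f$ is differentiable at $x_k+td_k$ and $\nabla f(x_k+td_k)^Td_k\ge c_2\nabla f(x_k)^Td_k$. (Wolfe at each step guarantees $f$ is differentiable at every iterate.) *)

theory Defs
  imports "HOL-Analysis.Analysis"
begin

definition grad :: "('a::real_inner \<Rightarrow> real) \<Rightarrow> 'a \<Rightarrow> 'a" where
  "grad f x = (THE D. GDERIV f x :> D)"

definition armijo :: "('a::real_inner \<Rightarrow> real) \<Rightarrow> real \<Rightarrow> 'a \<Rightarrow> 'a \<Rightarrow> real \<Rightarrow> bool" where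
  "armijo f c1 x d t \<longleftrightarrow> f (x + t *\<^sub>R d) \<le> f x + c1 * t * (grad f x \<bullet> d)"

definition wolfe :: "('a::real_inner \<Rightarrow> real) \<Rightarrow> real \<Rightarrow> 'a \<Rightarrow> 'a \<Rightarrow> real \<Rightarrow> bool" where
  "wolfe f c2 x d t \<longleftrightarrow> f differentiable (at (x + t *\<^sub>R d)) \<and>
      grad f (x + t *\<^sub>R d) \<bullet> d \<ge> c2 * (grad f x \<bullet> d)"

text \<open>The test function f(x) = a |x^(1)| + sum_{i >= 2} x^(i); the distinguished
  coordinate "1" is the index i1 of the finite index type.\<close>
definition fex :: "real \<Rightarrow> 'n::finite \<Rightarrow> real^'n \<Rightarrow> real" where
  "fex a i1 x = a * \<bar>x $ i1\<bar> + (\<Sum>i\<in>UNIV - {i1}. x $ i)"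

end

theory Submission
  imports Defs
begin

definition Gv :: "real \<Rightarrow> 'n::finite \<Rightarrow> real^'n \<Rightarrow> real^'n" where
  "Gv a i1 x = (\<chi> i. if i = i1 then a * sgn (x$i1) else 1)"

definition Rs :: "'n::finite \<Rightarrow> real^'n \<Rightarrow> real" where
  "Rs i1 y = (\<Sum>i\<in>UNIV - {i1}. y $ i)"

lemma fex_Rs: "fex a i1 y = a * \<bar>y $ i1\<bar> + Rs i1 y"
  by (simp add: fex_def Rs_def)

lemma inner_G: "y \<bullet> Gv a i1 x = a * sgn (x$i1) * (y$i1) + Rs i1 y"
proof -
  have "y \<bullet> Gv a i1 x = (\<Sum>i\<in>UNIV. y$i * Gv a i1 x $ i)"
    by (simp add: inner_vec_def)
  also have "\<dots> = y$i1 * Gv a i1 x $ i1 + (\<Sum>i\<in>UNIV-{i1}. y$i * Gv a i1 x $ i)"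
    by (simp add: sum.remove[of UNIV i1])
  also have "(\<Sum>i\<in>UNIV-{i1}. y$i * Gv a i1 x $ i) = Rs i1 y"
    unfolding Rs_def by (rule sum.cong) (auto simp: Gv_def)
  finally show ?thesis by (simp add: Gv_def)
qed

lemma Rs_G: fixes i1 :: "'n::finite" shows "Rs i1 (Gv a i1 x) = real CARD('n) - 1"
proof -
  have "Rs i1 (Gv a i1 x) = (\<Sum>i\<in>(UNIV::'n set)-{i1}. 1)"
    unfolding Rs_def by (rule sum.cong) (auto simp: Gv_def)
  also have "\<dots> = real CARD('n) - 1" by (simp add: card_Diff_singleton of_nat_diff)
  finally show ?thesis .
qed

lemma GG: "Gv a i1 y \<bullet> Gv a i1 (z::real^'n::finite) = a\<^sup>2 * sgn (y$i1) * sgn (z$i1) + (real CARD('n) - 1)"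
  by (simp only: inner_G Rs_G) (simp add: Gv_def power2_eq_square)

lemma gderiv_fex:
  fixes x :: "real^'n::finite"
  assumes "x $ i1 \<noteq> 0"
  shows "GDERIV (fex a i1) x :> Gv a i1 x"
proof -
  let ?S = "{y::real^'n. 0 < sgn (x$i1) * y$i1}"
  have op: "open ?S"
    by (rule open_Collect_less) (auto intro!: continuous_intros)
  have xs: "x \<in> ?S" using assms by (auto simp: sgn_real_def)
  have lin: "((\<lambda>y. y \<bullet> Gv a i1 x) has_derivative (\<lambda>h. h \<bullet> Gv a i1 x)) (at x)"
    by (rule bounded_linear.has_derivative[OF bounded_linear_inner_left]) (rule has_derivative_ident)
  have eq: "y \<bullet> Gv a i1 x = fex a i1 y" if "y \<in> ?S" for y
  proof -
    have "\<bar>y$i1\<bar> = sgn (x$i1) * y$i1" using that assms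
      by (cases "x$i1 > 0") (auto simp: sgn_real_def abs_if split: if_splits)
    thus ?thesis by (simp add: inner_G fex_Rs)
  qed
  show ?thesis unfolding gderiv_def
    by (rule has_derivative_transform_within_open[OF lin op xs eq])
qed

lemma grad_fex:
  fixes x :: "real^'n::finite"
  assumes "x $ i1 \<noteq> 0"
  shows "grad (fex a i1) x = Gv a i1 x"
  unfolding grad_def
proof (rule the_equality)
  show "GDERIV (fex a i1) x :> Gv a i1 x" using gderiv_fex[OF assms] .
  fix D assume "GDERIV (fex a i1) x :> D"
  hence "(\<lambda>h. h \<bullet> D) = (\<lambda>h. h \<bullet> Gv a i1 x)"
    using gderiv_fex[OF assms] unfolding gderiv_def by (rule has_derivative_unique)
  hence "(D - Gv a i1 x) \<bullet> D = (D - Gv a i1 x) \<bullet> Gv a i1 x" by metis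
  hence "(D - Gv a i1 x) \<bullet> (D - Gv a i1 x) = 0" by (simp add: inner_diff_right)
  thus "D = Gv a i1 x" by simp
qed

lemma fex_nondiff:
  fixes x :: "real^'n::finite"
  assumes "fex a i1 differentiable (at x)" and "a > 0"
  shows "x $ i1 \<noteq> 0"
proof
  assume x0: "x $ i1 = 0"
  obtain F where F: "(fex a i1 has_derivative F) (at x)"
    using assms(1) unfolding differentiable_def by blast
  let ?e = "axis i1 (1::real) :: real^'n"
  let ?g = "\<lambda>t::real. fex a i1 (x + t *\<^sub>R ?e)"
  have p: "((\<lambda>t::real. x + t *\<^sub>R ?e) has_derivative (\<lambda>s. s *\<^sub>R ?e)) (at 0)"
    by (auto intro!: derivative_eq_intros)
  have F': "(fex a i1 has_derivative F) (at ((\<lambda>t::real. x + t *\<^sub>R ?e) 0))" using F by simp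
  have "((fex a i1 \<circ> (\<lambda>t::real. x + t *\<^sub>R ?e)) has_derivative (F \<circ> (\<lambda>s. s *\<^sub>R ?e))) (at 0)"
    by (rule diff_chain_at[OF p F'])
  moreover have "F \<circ> (\<lambda>s. s *\<^sub>R ?e) = (\<lambda>s. s * F ?e)"
    using has_derivative_linear[OF F] by (auto simp: linear_scale)
  ultimately have D0: "(?g has_derivative (\<lambda>s. s * F ?e)) (at 0)"
    by (simp add: o_def)
  have D: "(?g has_real_derivative F ?e) (at 0)"
    unfolding has_field_derivative_def using D0 by (simp add: mult.commute[of _ "F ?e"])
  have gt: "?g t = a * \<bar>t\<bar> + Rs i1 x" for t
  proof -
    have "Rs i1 (x + t *\<^sub>R ?e) = Rs i1 x" unfolding Rs_def
      by (rule sum.cong) (auto simp: axis_def)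
    thus ?thesis using x0 by (simp add: fex_Rs axis_def)
  qed
  have fx: "fex a i1 x = Rs i1 x" using x0 by (simp add: fex_Rs)
  have D1: "((\<lambda>t. ?g t - a * t) has_real_derivative F ?e - a) (at 0)"
    by (auto intro!: derivative_eq_intros D)
  have D2: "((\<lambda>t. ?g t + a * t) has_real_derivative F ?e + a) (at 0)"
    by (auto intro!: derivative_eq_intros D)
  have "F ?e - a = 0"
  proof (rule DERIV_local_min[OF D1 zero_less_one], intro allI impI)
    fix y :: real
    have "a * y \<le> a * \<bar>y\<bar>" using assms(2) by (intro mult_left_mono) auto
    thus "?g 0 - a * 0 \<le> ?g y - a * y" unfolding gt by simp
  qed
  moreover have "F ?e + a = 0"
  proof (rule DERIV_local_min[OF D2 zero_less_one], intro allI impI)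
    fix y :: real
    have "- (a * y) \<le> a * \<bar>y\<bar>" using assms(2) by (simp add: abs_if)
    thus "?g 0 + a * 0 \<le> ?g y + a * y" unfolding gt by simp
  qed
  ultimately show False using assms(2) by linarith
qed

theorem theorem1:
  fixes a c1 c2 :: real and i1 :: "'n::finite"
    and x d :: "nat \<Rightarrow> real^'n" and t :: "nat \<Rightarrow> real"
  assumes n2: "CARD('n) \<ge> 2"
    and ha: "a \<ge> sqrt (real CARD('n) - 1)"
    and hc: "0 < c1" "c1 < c2" "c2 < 1"
    and hx0: "x 0 $ i1 \<noteq> 0"
    and hd: "\<And>k. d k = - grad (fex a i1) (x k)"
    and hx: "\<And>k. x (Suc k) = x k + t k *\<^sub>R d k"
    and ht: "\<And>k. t k > 0"
    and hA: "\<And>k. armijo (fex a i1) c1 (x k) (d k) (t k)"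
    and hW: "\<And>k. wolfe (fex a i1) c2 (x k) (d k) (t k)"
  shows "(\<forall>N\<ge>1.
            c1 * (a\<^sup>2 + real CARD('n) - 1) * (\<Sum>k<N. t k)
              \<le> fex a i1 (x 0) - fex a i1 (x N)
          \<and> fex a i1 (x 0) - fex a i1 (x N)
              \<le> (real CARD('n) - 1) * (\<Sum>k<N. t k) + a * \<bar>x 0 $ i1\<bar>)
       \<and> (bdd_above (range (\<lambda>N. \<Sum>k<N. t k)) \<longleftrightarrow> bdd_below (range (\<lambda>N. fex a i1 (x N))))
       \<and> (bdd_below (range (\<lambda>N. fex a i1 (x N))) \<longleftrightarrow>
            (\<exists>xb. x \<longlonglongrightarrow> xb \<and> xb $ i1 = 0))"
proof -
  define n where "n = real CARD('n)"
  define K where "K = a\<^sup>2 + n - 1"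
  define S where "S = (\<lambda>N. \<Sum>k<N. t k)"
  define f where "f = fex a i1"
  have n1: "n - 1 \<ge> 1" using n2 unfolding n_def by simp
  have "sqrt (n - 1) \<ge> 1" using n1 by simp
  hence a1: "a \<ge> 1" using ha unfolding n_def by linarith
  have "a\<^sup>2 \<ge> 1" using a1 by (simp add: one_le_power)
  hence Kpos: "K > 0" unfolding K_def using n1 by linarith
  have nz: "x k $ i1 \<noteq> 0" for k
  proof (induction k)
    case 0 show ?case using hx0 .
  next
    case (Suc k)
    have "fex a i1 differentiable (at (x (Suc k)))" using hW[of k] hx[of k] by (simp add: wolfe_def)
    moreover have "a > 0" using a1 by simp
    ultimately show ?case by (rule fex_nondiff)
  qed
  have gr: "grad f (x k) = Gv a i1 (x k)" for k unfolding f_def using grad_fex[OF nz] .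
  have dk: "d k = - Gv a i1 (x k)" for k using hd[of k] gr[of k] f_def by simp
  have sq: "sgn (x k $ i1) * sgn (x k $ i1) = 1" for k using nz[of k] by (simp add: sgn_real_def)
  have gdk: "grad f (x k) \<bullet> d k = - K" for k
    using sq[of k] by (simp add: gr dk GG K_def n_def mult.assoc)
  have F1: "f (x (Suc k)) \<le> f (x k) - c1 * t k * K" for k
    using hA[of k] gdk[of k] unfolding armijo_def f_def[symmetric] hx[symmetric] by simp
  have F2: "x (Suc k) $ i1 * x k $ i1 < 0" for k
  proof (rule ccontr)
    assume "\<not> ?thesis"
    hence "x (Suc k) $ i1 * x k $ i1 > 0" using nz[of k] nz[of "Suc k"]
      by (metis linorder_neqE_linordered_idom mult_eq_0_iff)
    hence ss: "sgn (x (Suc k) $ i1) * sgn (x k $ i1) = 1"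
      by (metis sgn_mult sgn_pos)
    have "grad f (x (Suc k)) \<bullet> d k \<ge> c2 * (grad f (x k) \<bullet> d k)"
      using hW[of k] unfolding wolfe_def f_def[symmetric] hx[symmetric] by simp
    moreover have "grad f (x (Suc k)) \<bullet> d k = - (a\<^sup>2 * (sgn (x (Suc k) $ i1) * sgn (x k $ i1)) + (n - 1))"
      unfolding gr dk inner_minus_right GG n_def by (simp add: mult.assoc)
    ultimately have "- K \<ge> c2 * (- K)"
      using ss gdk[of k] by (simp add: K_def)
    thus False using Kpos hc by (simp add: mult_less_cancel_right1)
  qed
  have Rstep: "Rs i1 (x (Suc k)) = Rs i1 (x k) - (n - 1) * t k" for k
  proof -
    have "Rs i1 (x (Suc k)) = (\<Sum>i\<in>UNIV-{i1}. x k $ i - t k)"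
      unfolding Rs_def by (rule sum.cong) (auto simp: hx dk Gv_def)
    also have "\<dots> = Rs i1 (x k) - (n - 1) * t k"
      by (simp add: sum_subtractf Rs_def n_def card_Diff_singleton of_nat_diff)
    finally show ?thesis .
  qed
  have RN: "Rs i1 (x N) = Rs i1 (x 0) - (n - 1) * S N" for N
    by (induction N) (auto simp: S_def Rstep algebra_simps)
  have fR: "f y = a * \<bar>y $ i1\<bar> + Rs i1 y" for y unfolding f_def by (rule fex_Rs)
  have low: "f (x N) \<le> f (x 0) - c1 * K * S N" for N
  proof (induction N)
    case 0 show ?case by (simp add: S_def)
  next
    case (Suc N) thus ?case using F1[of N] by (simp add: S_def algebra_simps)
  qed
  have upp: "f (x 0) - f (x N) \<le> (n - 1) * S N + a * \<bar>x 0 $ i1\<bar>" for N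
    using RN[of N] fR[of "x N"] fR[of "x 0"] a1 by simp
  have Smono: "mono S" unfolding S_def mono_def
    using ht by (intro allI impI sum_mono2) (auto simp: less_imp_le)
  have part1: "bdd_above (range S) \<longleftrightarrow> bdd_below (range (\<lambda>N. f (x N)))"
  proof
    assume "bdd_above (range S)"
    then obtain B where B: "\<And>N. S N \<le> B" by (auto simp: bdd_above_def)
    have "Rs i1 (x 0) - (n - 1) * B \<le> f (x N)" for N
    proof -
      have "(n - 1) * S N \<le> (n - 1) * B" using B[of N] n1 by (intro mult_left_mono) auto
      moreover have "0 \<le> a * \<bar>x N $ i1\<bar>" using a1 by simp
      ultimately show ?thesis using RN[of N] fR[of "x N"] by linarith
    qed
    thus "bdd_below (range (\<lambda>N. f (x N)))" by (intro bdd_belowI2) 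
  next
    assume "bdd_below (range (\<lambda>N. f (x N)))"
    then obtain L where L: "\<And>N. L \<le> f (x N)" by (auto simp: bdd_below_def)
    have "S N \<le> (f (x 0) - L) / (c1 * K)" for N
    proof -
      have "c1 * K * S N \<le> f (x 0) - L" using low[of N] L[of N] by linarith
      thus ?thesis using hc Kpos by (simp add: pos_le_divide_eq mult.commute)
    qed
    thus "bdd_above (range S)" by (intro bdd_aboveI2)
  qed
  have part2: "bdd_below (range (\<lambda>N. f (x N))) \<longleftrightarrow> (\<exists>xb. x \<longlonglongrightarrow> xb \<and> xb $ i1 = 0)"
  proof
    assume "\<exists>xb. x \<longlonglongrightarrow> xb \<and> xb $ i1 = 0"
    then obtain xb where xb: "x \<longlonglongrightarrow> xb" by blast
    have "(\<lambda>N. f (x N)) \<longlonglongrightarrow> f xb" unfolding f_def fex_def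
      by (intro tendsto_intros xb)
    hence "Bseq (\<lambda>N. f (x N))" by (rule convergent_imp_Bseq[OF convergentI])
    then obtain M where M: "\<And>N. norm (f (x N)) \<le> M" using BseqD by (metis real_norm_def)
    have "- M \<le> f (x N)" for N using M[of N] by simp
    thus "bdd_below (range (\<lambda>N. f (x N)))" by (intro bdd_belowI2)
  next
    assume "bdd_below (range (\<lambda>N. f (x N)))"
    hence "bdd_above (range S)" using part1 by simp
    then obtain B where B: "\<And>N. S N \<le> B" by (auto simp: bdd_above_def)
    have summ: "summable t"
    proof (rule bounded_imp_summable)
      show "0 \<le> t k" for k using ht[of k] by simp
      show "(\<Sum>k\<le>N. t k) \<le> B" for N using B[of "Suc N"] by (simp add: S_def lessThan_Suc_atMost)
    qed
    define C where "C = real CARD('n) * (a + 1)"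
    have nd: "norm (d k) \<le> C" for k
    proof -
      have "norm (d k) \<le> (\<Sum>i\<in>UNIV. \<bar>d k $ i\<bar>)" by (rule norm_le_l1_cart)
      also have "\<dots> \<le> (\<Sum>i\<in>(UNIV::'n set). a + 1)"
        using a1 by (intro sum_mono) (auto simp: dk Gv_def abs_mult abs_sgn_eq)
      finally show ?thesis by (simp add: C_def)
    qed
    have summ2: "summable (\<lambda>k. t k *\<^sub>R d k)"
    proof (rule summable_comparison_test')
      show "summable (\<lambda>k. t k * C)" using summ by (rule summable_mult2)
      show "norm (t k *\<^sub>R d k) \<le> t k * C" for k
        using nd[of k] ht[of k] by (simp add: mult_left_mono less_imp_le)
    qed
    have xN: "x N = x 0 + (\<Sum>k<N. t k *\<^sub>R d k)" for N
      by (induction N) (auto simp: hx)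
    have conv: "x \<longlonglongrightarrow> x 0 + (\<Sum>k. t k *\<^sub>R d k)"
    proof -
      have "(\<lambda>N. x 0 + (\<Sum>k<N. t k *\<^sub>R d k)) \<longlonglongrightarrow> x 0 + (\<Sum>k. t k *\<^sub>R d k)"
        by (intro tendsto_intros summable_LIMSEQ summ2)
      moreover have "(\<lambda>N. x 0 + (\<Sum>k<N. t k *\<^sub>R d k)) = x" by (rule ext) (rule xN[symmetric])
      ultimately show ?thesis by simp
    qed
    define xb where "xb = x 0 + (\<Sum>k. t k *\<^sub>R d k)"
    have c1: "(\<lambda>k. x k $ i1) \<longlonglongrightarrow> xb $ i1" using conv unfolding xb_def by (intro tendsto_intros)
    have c2: "(\<lambda>k. x (Suc k) $ i1) \<longlonglongrightarrow> xb $ i1" using LIMSEQ_Suc[OF c1] by simp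
    have "(\<lambda>k. x (Suc k) $ i1 * x k $ i1) \<longlonglongrightarrow> xb $ i1 * xb $ i1" by (intro tendsto_intros c1 c2)
    hence "xb $ i1 * xb $ i1 \<le> 0" by (rule LIMSEQ_le_const2) (use F2 less_imp_le in blast)
    hence "xb $ i1 = 0" using mult_le_0_iff by (metis antisym)
    thus "\<exists>xb. x \<longlonglongrightarrow> xb \<and> xb $ i1 = 0" using conv xb_def by blast
  qed
  show ?thesis
    using low upp part1 part2 unfolding S_def f_def K_def n_def
    by (auto simp: algebra_simps)
qed

end
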